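(* Let $M,N,Q$ be positive integers with $N\le M$, let $S=\{\vec b\in\mathbb{F}_2^M: H(\vec b)=N\}$, let $\mathbf{G}\in\mathbb{F}_2^{Q\times M}$ be such that $\vec b\mapsto\mathbf{G}\vec b$ is injective on $S$, let $\vec a,\vec c\in\mathbb{F}_2^M$, and let $T\subseteq S$. Define the operators on $(\mathbb{C}^2)^{\otimes Q}$ $$A_{\pm}=X^{\mathbf{G}\vec a}\sum_{\vec b\in T}(-1)^{\vec c\cdot\vec b}\left(P^{\mathbf{G}\vec b}\pm P^{\mathbf{G}(\vec a\oplus\vec b)}\right).$$ Then each of $A_+$ and $A_-$ is a linear combination of pairwise commuting Pauli strings (elements of $\{I,X,Y,Z\}^{\otimes Q}$); in particular each can be measured in a single (Clifford) measurement basis.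
   Context: For $\vec v\in\mathbb{F}_2^Q$: $X^{\vec v}=\prod_{m=1}^Q\sigma_{x,m}^{\vec v[m]}$ (so $X^{\vec v}|\vec u\rangle=|\vec u\oplus\vec v\rangle$), and $P^{\vec v}=\prod_{m=1}^Q\frac{1+(-1)^{\vec v[m]}\sigma_{z,m}}{2}=|\vec v\rangle\langle\vec v|$ is the projector onto the computational basis state $|\vec v\rangle$. $H(\cdot)$ is Hamming weight, $\oplus$ is bitwise addition mod 2 and $\vec c\cdot\vec b$ is the mod-2 inner product. The operators $A_\pm$ are the (anti-)Hermitian parts (up to a factor) of a linearly encoded fermionic operator $\mathcal{E}(\hat O)=X^{\mathbf{G}\vec a}\sum_{\vec b\in T}(-1)^{\vec c\cdot\vec b}P^{\mathbf{G}\vec b}$. *)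

theory Defs
  imports Complex_Main
begin

(* Bit vectors in F_2^I are functions I => bool (True = 1), for a finite index type I. *)

definition hamming :: "('i::finite \<Rightarrow> bool) \<Rightarrow> nat" where
  "hamming b = card {m. b m}"

definition bxor :: "('i \<Rightarrow> bool) \<Rightarrow> ('i \<Rightarrow> bool) \<Rightarrow> ('i \<Rightarrow> bool)" where
  "bxor u v = (\<lambda>m. u m \<noteq> v m)"

definition bdot :: "('i::finite \<Rightarrow> bool) \<Rightarrow> ('i \<Rightarrow> bool) \<Rightarrow> bool" where
  "bdot c b = odd (card {m. c m \<and> b m})"

definition gmul :: "('q \<Rightarrow> 'm::finite \<Rightarrow> bool) \<Rightarrow> ('m \<Rightarrow> bool) \<Rightarrow> ('q \<Rightarrow> bool)" where
  "gmul G b = (\<lambda>q. odd (card {m. G q m \<and> b m}))"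

(* operators on (C^2)^{\<otimes> Q}, given by their matrix entries <u| A |w> in the computational basis *)
type_synonym 'q op = "('q \<Rightarrow> bool) \<Rightarrow> ('q \<Rightarrow> bool) \<Rightarrow> complex"

definition op_mult :: "'q::finite op \<Rightarrow> 'q op \<Rightarrow> 'q op" where
  "op_mult A B = (\<lambda>u w. \<Sum>v\<in>UNIV. A u v * B v w)"

definition Xop :: "('q \<Rightarrow> bool) \<Rightarrow> 'q op" where
  "Xop v = (\<lambda>u w. if u = bxor w v then 1 else 0)"

definition Pop :: "('q \<Rightarrow> bool) \<Rightarrow> 'q op" where
  "Pop v = (\<lambda>u w. if u = v \<and> w = v then 1 else 0)"

(* A_{\<pm>}, with s = 1 for A_+ and s = -1 for A_- *)
definition A_pm :: "('q::finite \<Rightarrow> 'm::finite \<Rightarrow> bool) \<Rightarrow> ('m \<Rightarrow> bool) \<Rightarrow> ('m \<Rightarrow> bool)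
    \<Rightarrow> ('m \<Rightarrow> bool) set \<Rightarrow> complex \<Rightarrow> 'q op" where
  "A_pm G a c T s = op_mult (Xop (gmul G a))
     (\<lambda>u w. \<Sum>b\<in>T. (if bdot c b then -1 else 1) *
               (Pop (gmul G b) u w + s * Pop (gmul G (bxor a b)) u w))"

datatype pauli = PI | PX | PY | PZ

(* single-qubit Pauli matrices, entries indexed by bool (False = |0>, True = |1>) *)
fun pmat :: "pauli \<Rightarrow> bool \<Rightarrow> bool \<Rightarrow> complex" where
  "pmat PI x y = (if x = y then 1 else 0)"
| "pmat PX x y = (if x \<noteq> y then 1 else 0)"
| "pmat PY x y = (if x = y then 0 else if x then \<i> else - \<i>)"
| "pmat PZ x y = (if x = y then (if x then -1 else 1) else 0)"

definition pauli_string :: "('q::finite \<Rightarrow> pauli) \<Rightarrow> 'q op" where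
  "pauli_string p = (\<lambda>u w. \<Prod>m\<in>UNIV. pmat (p m) (u m) (w m))"

definition commuting_pauli_comb :: "'q::finite op \<Rightarrow> bool" where
  "commuting_pauli_comb A \<longleftrightarrow>
     (\<exists>P :: ('q \<Rightarrow> pauli) set. \<exists>coef :: ('q \<Rightarrow> pauli) \<Rightarrow> complex.
        finite P \<and>
        (\<forall>p\<in>P. \<forall>p'\<in>P. op_mult (pauli_string p) (pauli_string p') =
                          op_mult (pauli_string p') (pauli_string p)) \<and>
        A = (\<lambda>u w. \<Sum>p\<in>P. coef p * pauli_string p u w))"

end

theory Submission
  imports Defs "HOL-Library.FuncSet"
begin

lemma sum_fun_prod:
  fixes F :: "'q::finite \<Rightarrow> bool \<Rightarrow> complex"
  shows "(\<Sum>w\<in>(UNIV::('q \<Rightarrow> bool) set). \<Prod>m\<in>UNIV. F m (w m)) = (\<Prod>m\<in>UNIV. \<Sum>b\<in>UNIV. F m b)"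
  using prod_sum_PiE[of "UNIV::'q set" "\<lambda>_. UNIV::bool set" F] by simp

lemma prod_if_zero:
  fixes a :: "'q::finite \<Rightarrow> complex"
  shows "(\<Prod>m\<in>UNIV. if P m then a m else 0) = (if \<forall>m. P m then (\<Prod>m\<in>UNIV. a m) else 0)"
proof (cases "\<forall>m. P m")
  case True then show ?thesis by simp
next
  case False
  then obtain m where "\<not> P m" by blast
  then show ?thesis using False by (intro trans[OF prod_zero]) auto
qed

lemma bxor_bxor[simp]: "bxor (bxor u v) v = u"
  by (auto simp: bxor_def)

lemma bxor_eq: "(u = bxor x v) = (x = bxor u v)"
  by (auto simp: bxor_def fun_eq_iff)

lemma bxor_comm: "bxor u v = bxor v u"
  by (auto simp: bxor_def fun_eq_iff)

lemma card_parity_xor: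
  fixes A B :: "'a set"
  assumes "finite A" "finite B"
  shows "odd (card ((A - B) \<union> (B - A))) = (odd (card A) \<noteq> odd (card B))"
proof -
  have 1: "card A = card (A - B) + card (A \<inter> B)"
    using card_Int_Diff[OF assms(1), of B] by simp
  have 2: "card B = card (B - A) + card (A \<inter> B)"
    using card_Int_Diff[OF assms(2), of A] by (simp add: Int_commute)
  have 3: "card ((A - B) \<union> (B - A)) = card (A - B) + card (B - A)"
    using assms by (intro card_Un_disjoint) auto
  show ?thesis using 1 2 3 by presburger
qed

lemma gmul_bxor: "gmul G (bxor a b) = bxor (gmul G a) (gmul G b)"
proof (rule ext)
  fix q
  have e: "{m. G q m \<and> bxor a b m} = ({m. G q m \<and> a m} - {m. G q m \<and> b m}) \<union> ({m. G q m \<and> b m} - {m. G q m \<and> a m})"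
    by (auto simp: bxor_def)
  show "gmul G (bxor a b) q = bxor (gmul G a) (gmul G b) q"
    unfolding gmul_def bxor_def[of "\<lambda>q. _"] e
    by (subst card_parity_xor) (auto simp: bxor_def)
qed

definition gg :: "bool \<Rightarrow> bool \<Rightarrow> bool \<Rightarrow> complex" where
  "gg vb wb x = (if vb then (if wb then (if x then \<i> else - \<i>) else 1) else (if wb \<and> x then -1 else 1))"

definition Gw :: "('q::finite \<Rightarrow> bool) \<Rightarrow> ('q \<Rightarrow> bool) \<Rightarrow> ('q \<Rightarrow> bool) \<Rightarrow> complex" where
  "Gw v w u = (\<Prod>m\<in>UNIV. gg (v m) (w m) (u m))"

definition lam :: "('q::finite \<Rightarrow> bool) \<Rightarrow> ('q \<Rightarrow> bool) \<Rightarrow> complex" where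
  "lam v w = (\<Prod>m\<in>UNIV. if v m \<and> w m then -1 else 1)"

definition pw :: "('q \<Rightarrow> bool) \<Rightarrow> ('q \<Rightarrow> bool) \<Rightarrow> 'q \<Rightarrow> pauli" where
  "pw v w m = (if v m then (if w m then PY else PX) else (if w m then PZ else PI))"

definition wof :: "('q \<Rightarrow> pauli) \<Rightarrow> 'q \<Rightarrow> bool" where
  "wof p = (\<lambda>m. p m = PY \<or> p m = PZ)"

lemma wof_pw[simp]: "wof (pw v w) = w"
  by (auto simp: wof_def pw_def fun_eq_iff)

lemma pmat_pw: "pmat (pw v w m) x y = (if x = (y \<noteq> v m) then gg (v m) (w m) x else 0)"
  by (cases "v m"; cases "w m"; cases x; cases y) (auto simp: pw_def gg_def)

lemma ps_pw: "pauli_string (pw v w) u x = (if u = bxor x v then Gw v w u else 0)"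
proof -
  have "pauli_string (pw v w) u x = (\<Prod>m\<in>UNIV. if u m = (x m \<noteq> v m) then gg (v m) (w m) (u m) else 0)"
    unfolding pauli_string_def pmat_pw ..
  also have "\<dots> = (if u = bxor x v then Gw v w u else 0)"
    unfolding prod_if_zero Gw_def by (simp add: bxor_def fun_eq_iff)
  finally show ?thesis .
qed

lemma Gw_shift: "Gw v w (bxor u v) = lam v w * Gw v w u"
  unfolding Gw_def lam_def prod.distrib[symmetric]
  by (rule prod.cong) (auto simp: gg_def bxor_def)

lemma pm1_prod: "(\<Prod>m\<in>(UNIV::'q::finite set). if P m then -1 else 1) = (1::complex) \<or>
   (\<Prod>m\<in>(UNIV::'q::finite set). if P m then -1 else 1) = (-1::complex)"
proof -
  have "(\<Prod>m\<in>(UNIV::'q set). if P m then -1 else 1) = ((-1::complex) ^ card {m. P m})"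
    by (simp add: prod.If_cases Collect_conv_if)
  then show ?thesis by (metis neg_one_even_power neg_one_odd_power)
qed

lemma lam_pm: "lam v w = 1 \<or> lam v w = -1"
  unfolding lam_def by (rule pm1_prod)

lemma orth: "(\<Sum>b\<in>UNIV. gg vb b x * cnj (gg vb b y)) = (if x = y then 2 else 0)"
  by (cases vb; cases x; cases y) (auto simp: gg_def UNIV_bool)

lemma walsh:
  fixes v :: "'q::finite \<Rightarrow> bool"
  shows "(\<Sum>w\<in>UNIV. Gw v w u * cnj (Gw v w y)) = (if u = y then 2 ^ card (UNIV::'q set) else 0)"
proof -
  have "(\<Sum>w\<in>UNIV. Gw v w u * cnj (Gw v w y)) = (\<Sum>w\<in>UNIV. \<Prod>m\<in>UNIV. gg (v m) (w m) (u m) * cnj (gg (v m) (w m) (y m)))"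
    unfolding Gw_def by (simp add: prod.distrib cnj_prod)
  also have "\<dots> = (\<Prod>m\<in>(UNIV::'q set). if u m = y m then 2 else 0)"
    using sum_fun_prod[of "\<lambda>m b. gg (v m) b (u m) * cnj (gg (v m) b (y m))"] by (simp only: orth)
  also have "\<dots> = (if u = y then 2 ^ card (UNIV::'q set) else 0)"
    unfolding prod_if_zero by (simp add: fun_eq_iff)
  finally show ?thesis .
qed


definition cf :: "('q::finite \<Rightarrow> bool) \<Rightarrow> (('q \<Rightarrow> bool) \<Rightarrow> complex) \<Rightarrow> ('q \<Rightarrow> bool) \<Rightarrow> complex" where
  "cf v f w = (\<Sum>y\<in>UNIV. f y * cnj (Gw v w y)) / 2 ^ card (UNIV::'q set)"

lemma expand:
  fixes v :: "'q::finite \<Rightarrow> bool"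
  shows "(\<Sum>w\<in>UNIV. cf v f w * Gw v w u) = f u"
proof -
  let ?n = "(2::complex) ^ card (UNIV::'q set)"
  have "(\<Sum>w\<in>UNIV. cf v f w * Gw v w u) = (\<Sum>w\<in>UNIV. \<Sum>y\<in>UNIV. f y * (Gw v w u * cnj (Gw v w y))) / ?n"
    unfolding cf_def sum_divide_distrib sum_distrib_right by (intro sum.cong refl) (simp add: algebra_simps)
  also have "\<dots> = (\<Sum>y\<in>UNIV. f y * (\<Sum>w\<in>UNIV. Gw v w u * cnj (Gw v w y))) / ?n"
    by (subst sum.swap) (simp add: sum_distrib_left)
  also have "\<dots> = (\<Sum>y\<in>UNIV. f y * (if u = y then ?n else 0)) / ?n"
    by (simp only: walsh)
  also have "\<dots> = f u"
    by (simp add: if_distrib cong: if_cong)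
  finally show ?thesis .
qed

lemma cnj_lam: "cnj (lam v w) = lam v w"
  using lam_pm[of v w] by auto

lemma coef_zero:
  fixes v :: "'q::finite \<Rightarrow> bool"
  assumes sym: "\<And>y. f (bxor y v) = s * f y" and s: "s = 1 \<or> s = -1" and ne: "lam v w \<noteq> s"
  shows "cf v f w = 0"
proof -
  let ?X = "(\<Sum>y\<in>UNIV. f y * cnj (Gw v w y))"
  have "?X = (\<Sum>y\<in>UNIV. f (bxor y v) * cnj (Gw v w (bxor y v)))"
    by (rule sum.reindex_bij_witness[where i="\<lambda>y. bxor y v" and j="\<lambda>y. bxor y v"]) auto
  also have "\<dots> = (s * lam v w) * ?X"
    unfolding sum_distrib_left by (rule sum.cong) (auto simp: sym Gw_shift cnj_lam)
  finally have "?X = (s * lam v w) * ?X" .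
  moreover have "s * lam v w = -1" using s lam_pm[of v w] ne by auto
  ultimately have "?X = 0" by auto
  then show ?thesis unfolding cf_def by simp
qed

lemma bxor_cancel: "(bxor u v = bxor z v) = (u = z)"
  by (metis bxor_bxor)

lemma opm: "op_mult (pauli_string (pw v w)) (pauli_string (pw v w')) u z
   = (if u = z then Gw v w u * (lam v w' * Gw v w' u) else 0)"
proof -
  have "op_mult (pauli_string (pw v w)) (pauli_string (pw v w')) u z
     = (\<Sum>x\<in>UNIV. if x = bxor u v then Gw v w u * (if x = bxor z v then Gw v w' x else 0) else 0)"
    unfolding op_mult_def ps_pw by (rule sum.cong) (auto simp: bxor_eq)
  also have "\<dots> = Gw v w u * (if bxor u v = bxor z v then Gw v w' (bxor u v) else 0)"
    by simp
  also have "\<dots> = (if u = z then Gw v w u * (lam v w' * Gw v w' u) else 0)"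
    by (simp add: bxor_cancel Gw_shift)
  finally show ?thesis .
qed

definition dd where
  "dd G a c T s y = (\<Sum>b\<in>T. (if bdot c b then -1 else 1) *
     ((if y = gmul G b then 1 else 0) + s * (if y = gmul G (bxor a b) then 1 else 0)))"

lemma A_entry: "A_pm G a c T s u z = (if u = bxor z (gmul G a) then dd G a c T s z else 0)"
proof -
  have D: "(\<Sum>b\<in>T. (if bdot c b then -1 else 1) * (Pop (gmul G b) x z + s * Pop (gmul G (bxor a b)) x z))
      = (if x = z then dd G a c T s z else 0)" for x
  proof (cases "x = z")
    case True then show ?thesis by (auto simp: dd_def Pop_def intro!: sum.cong)
  next
    case False
    then have "Pop y x z = 0" for y by (auto simp: Pop_def)
    then show ?thesis using False by simp
  qed
  have "A_pm G a c T s u z = (\<Sum>x\<in>UNIV. (if u = bxor x (gmul G a) then 1 else 0) * (if x = z then dd G a c T s z else 0))"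
    unfolding A_pm_def op_mult_def Xop_def D ..
  also have "\<dots> = (\<Sum>x\<in>UNIV. if x = z then (if u = bxor z (gmul G a) then dd G a c T s z else 0) else 0)"
    by (rule sum.cong) auto
  also have "\<dots> = (if u = bxor z (gmul G a) then dd G a c T s z else 0)"
    by simp
  finally show ?thesis .
qed

lemma bx1: "(bxor y p = q) = (y = bxor p q)"
  unfolding bxor_def fun_eq_iff by blast

lemma bx2: "(bxor y p = bxor p q) = (y = q)"
  unfolding bxor_def fun_eq_iff by blast

lemma ss_alg:
  fixes s e x y :: complex
  assumes "(s::complex) * s = 1"
  shows "s * (e * (x + s * y)) = e * (y + s * x)"
proof -
  have "s * (e * (x + s * y)) = s * e * x + (s * s) * e * y" by (simp add: algebra_simps)
  then show ?thesis using assms by (simp add: algebra_simps)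
qed

lemma dd_sym:
  assumes "(s::complex) * s = 1"
  shows "s * dd G a c T s (bxor y (gmul G a)) = dd G a c T s y"
proof -
  have e1: "(bxor y (gmul G a) = gmul G b) = (y = gmul G (bxor a b))" for b
    unfolding gmul_bxor by (rule bx1)
  have e2: "(bxor y (gmul G a) = gmul G (bxor a b)) = (y = gmul G b)" for b
    unfolding gmul_bxor by (rule bx2)
  show ?thesis
    unfolding dd_def sum_distrib_left e2 unfolding e1
    by (rule sum.cong[OF refl]) (rule ss_alg[OF assms])
qed

lemma main:
  fixes G :: "'q::finite \<Rightarrow> 'm::finite \<Rightarrow> bool"
  assumes s: "s = 1 \<or> s = -1"
  shows "commuting_pauli_comb (A_pm G a c T s)"
proof -
  define v where "v = gmul G a"
  define f where "f = (\<lambda>u. dd G a c T s (bxor u v))"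
  define W where "W = {w. lam v w = s}"
  have ss: "s * s = 1" using s by auto
  have sym: "f (bxor y v) = s * f y" for y
    unfolding f_def v_def using dd_sym[OF ss, of G a c T y] by simp
  have inj: "inj_on (pw v) W"
    by (metis inj_onI wof_pw)
  have comm: "op_mult (pauli_string p) (pauli_string p') = op_mult (pauli_string p') (pauli_string p)"
    if "p \<in> pw v ` W" "p' \<in> pw v ` W" for p p'
    using that by (auto simp: W_def opm fun_eq_iff algebra_simps)
  have eq: "A_pm G a c T s = (\<lambda>u z. \<Sum>p\<in>pw v ` W. cf v f (wof p) * pauli_string p u z)"
  proof (intro ext)
    fix u z
    have "(\<Sum>p\<in>pw v ` W. cf v f (wof p) * pauli_string p u z) = (\<Sum>w\<in>W. cf v f w * pauli_string (pw v w) u z)"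
      by (subst sum.reindex[OF inj]) simp
    also have "\<dots> = (\<Sum>w\<in>UNIV. cf v f w * pauli_string (pw v w) u z)"
      by (rule sum.mono_neutral_left) (auto simp: W_def coef_zero[where f=f and s=s and v=v, OF sym s])
    also have "\<dots> = (if u = bxor z v then (\<Sum>w\<in>UNIV. cf v f w * Gw v w u) else 0)"
      by (simp add: ps_pw)
    also have "\<dots> = (if u = bxor z v then f u else 0)"
      by (simp only: expand)
    also have "\<dots> = A_pm G a c T s u z"
      by (auto simp: A_entry f_def v_def)
    finally show "A_pm G a c T s u z = (\<Sum>p\<in>pw v ` W. cf v f (wof p) * pauli_string p u z)" by simp
  qed
  show ?thesis
    unfolding commuting_pauli_comb_def
  proof (intro exI conjI)
    show "finite (pw v ` W)" by simp
    show "\<forall>p\<in>pw v ` W. \<forall>p'\<in>pw v ` W. op_mult (pauli_string p) (pauli_string p') =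
                          op_mult (pauli_string p') (pauli_string p)" using comm by blast
    show "A_pm G a c T s = (\<lambda>u w. \<Sum>p\<in>pw v ` W. cf v f (wof p) * pauli_string p u w)" by (rule eq)
  qed
qed

theorem lemma3:
  fixes G :: "'q::finite \<Rightarrow> 'm::finite \<Rightarrow> bool"
    and a c :: "'m \<Rightarrow> bool"
    and N :: nat
    and T :: "('m \<Rightarrow> bool) set"
  assumes "1 \<le> N" and "N \<le> card (UNIV :: 'm set)"
    and "inj_on (gmul G) {b. hamming b = N}"
    and "T \<subseteq> {b. hamming b = N}"
  shows "commuting_pauli_comb (A_pm G a c T 1) \<and> commuting_pauli_comb (A_pm G a c T (-1))"
  by (intro conjI main) simp_all

end
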